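(* Let $g$ be a nondegenerate symmetric bilinear form on $\mathbb{R}^n$, $R:[0,1]\to\mathcal L(\mathbb{R}^n)$ a $C^1$ map of $g$-symmetric operators, $P\subset\mathbb{R}^n$ a subspace on which $g$ is nondegenerate and $S:P\to P$ $g$-symmetric. Then for every $t\in]0,1]$ the isomorphism $\psi_t\circ\varphi_t:\mathcal N_t\to\mathbb J[t]^\perp$ carries the restriction of $\hat I'(t)$ to $\mathcal N_t$ into the restriction of $-g$ to $\mathbb J[t]^\perp$; that is, for all $\hat V,\hat W\in\mathcal N_t$, $$\frac{d}{dt}\hat I_t(\hat V,\hat W)=-g\big((\varphi_t\hat V)'(t),(\varphi_t\hat W)'(t)\big).$$
   Context: $g$-symmetric: $g(Tx,y)=g(x,Ty)$; $\perp$ is $g$-orthogonality. $\mathbb J$ is the space of solutions of $J''=R(t)J$ on $[0,1]$ with $J(0)\in P$, $J'(0)+S[J(0)]\in P^\perp$; $\mathbb J[t]=\{J(t):J\in\mathbb J\}$. For $t\in]0,1]$: $\mathcal H_t=\{V\in H^1([0,t],\mathbb{R}^n):V(0)\in P,V(t)=0\}$, $\mathcal H=\mathcal H_1$, $I_t(V,W)=\int_0^t[g(V',W')+g(R(s)V,W)]ds-g(S[V(0)],W(0))$, $\varphi_t:\mathcal H\to\mathcal H_t$, $\varphi_t(\hat V)(s)=\hat V(s/t)$, $\hat I_t=I_t(\varphi_t\cdot,\varphi_t\cdot)$ on $\mathcal H$ (a $C^1$ curve $t\mapsto\hat I_t$ of bounded symmetric bilinear forms on $\mathcal H$, with derivative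 $\hat I'(t)$), $\mathcal N_t=\mathrm{Ker}(\hat I_t)$. The kernel of $I_t$ consists of the restrictions to $[0,t]$ of $J\in\mathbb J$ with $J(t)=0$, and $\psi_t:\mathrm{Ker}(I_t)\to\mathbb J[t]^\perp$, $\psi_t(V)=V'(t)$, is an isomorphism. *)

theory Defs
  imports "HOL-Analysis.Analysis"
begin

definition H1 :: "real \<Rightarrow> real \<Rightarrow> (real \<Rightarrow> 'a::euclidean_space) \<Rightarrow> bool" where
  "H1 a b V \<longleftrightarrow> (\<exists>V'. (\<forall>s\<in>{a..b}. (V' has_integral (V s - V a)) {a..s})
                     \<and> (\<lambda>s. (norm (V' s))\<^sup>2) integrable_on {a..b})"

text \<open>A (choice of) weak derivative of an H^1 function on [a,b]; unique up to null sets.\<close>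
definition H1deriv :: "real \<Rightarrow> real \<Rightarrow> (real \<Rightarrow> 'a::euclidean_space) \<Rightarrow> real \<Rightarrow> 'a" where
  "H1deriv a b V = (SOME V'. (\<forall>s\<in>{a..b}. (V' has_integral (V s - V a)) {a..s})
                     \<and> (\<lambda>s. (norm (V' s))\<^sup>2) integrable_on {a..b})"

definition Hsp :: "(real^'n) set \<Rightarrow> real \<Rightarrow> (real \<Rightarrow> real^'n) set" where
  "Hsp P t = {V. H1 0 t V \<and> V 0 \<in> P \<and> V t = 0}"

definition Iform :: "(real^'n \<Rightarrow> real^'n \<Rightarrow> real) \<Rightarrow> (real \<Rightarrow> real^'n^'n)
    \<Rightarrow> (real^'n \<Rightarrow> real^'n) \<Rightarrow> real \<Rightarrow> (real \<Rightarrow> real^'n) \<Rightarrow> (real \<Rightarrow> real^'n) \<Rightarrow> real" where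
  "Iform g R S t V W =
     integral {0..t} (\<lambda>s. g (H1deriv 0 t V s) (H1deriv 0 t W s) + g (R s *v V s) (W s))
     - g (S (V 0)) (W 0)"

definition phi :: "real \<Rightarrow> (real \<Rightarrow> 'a) \<Rightarrow> real \<Rightarrow> 'a" where
  "phi t V = (\<lambda>s. V (s / t))"

definition Ihat :: "(real^'n \<Rightarrow> real^'n \<Rightarrow> real) \<Rightarrow> (real \<Rightarrow> real^'n^'n)
    \<Rightarrow> (real^'n \<Rightarrow> real^'n) \<Rightarrow> real \<Rightarrow> (real \<Rightarrow> real^'n) \<Rightarrow> (real \<Rightarrow> real^'n) \<Rightarrow> real" where
  "Ihat g R S t V W = Iform g R S t (phi t V) (phi t W)"

definition Nker :: "(real^'n \<Rightarrow> real^'n \<Rightarrow> real) \<Rightarrow> (real \<Rightarrow> real^'n^'n)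
    \<Rightarrow> (real^'n) set \<Rightarrow> (real^'n \<Rightarrow> real^'n) \<Rightarrow> real \<Rightarrow> (real \<Rightarrow> real^'n) set" where
  "Nker g R P S t = {V \<in> Hsp P 1. \<forall>W \<in> Hsp P 1. Ihat g R S t V W = 0}"

end

theory Submission
  imports Defs
begin

lemma U_real:
  fixes f :: "real \<Rightarrow> real"
  assumes ab: "a \<le> b" and fi: "f absolutely_integrable_on {a..b}"
    and z: "\<And>s. s \<in> {a..b} \<Longrightarrow> integral {a..s} f = 0"
  shows "negligible {x\<in>{a..b}. f x \<noteq> 0}"
proof -
  define h where "h x = indicator {a..b} x * f x" for x
  have hi: "integrable lebesgue h" using fi unfolding h_def set_integrable_def by simp
  then have hm: "h \<in> borel_measurable lebesgue" by auto
  then obtain g where gb: "g \<in> borel_measurable lborel" and hg: "AE x in lborel. h x = g x"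
    using completion_ex_borel_measurable_real by blast
  have hgL: "AE x in lebesgue. h x = g x" using hg by (rule AE_completion)
  have gbL: "g \<in> borel_measurable lebesgue" using gb by (rule measurable_completion)
  have gi: "integrable lborel g"
  proof -
    have "integrable lebesgue g" by (rule integrable_cong_AE_imp[OF hi gbL hgL])
    then show ?thesis using integrable_completion[of g lborel] gb by simp
  qed
  have sub: "f absolutely_integrable_on {a..s}" if "s \<le> b" for s
    using fi by (rule set_integrable_subset) (use that in auto)
  have int0: "(LINT y|lborel. indicator {x<..} y * g y) = 0" for x
  proof -
    have m1: "(\<lambda>y. indicator {x<..} y * g y) \<in> borel_measurable lborel"
      by (intro borel_measurable_times borel_measurable_indicator gb) auto
    have "(LINT y|lborel. indicator {x<..} y * g y) = (LINT y|lebesgue. indicator {x<..} y * g y)"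
      using integral_completion[OF m1] by simp
    also have "\<dots> = (LINT y|lebesgue. indicator {x<..} y * h y)"
    proof (rule integral_cong_AE)
      show "(\<lambda>y. indicator {x<..} y * g y) \<in> borel_measurable lebesgue"
        using m1 by (rule measurable_completion)
      show "(\<lambda>y. indicator {x<..} y * h y) \<in> borel_measurable lebesgue"
        by (intro borel_measurable_times borel_measurable_indicator hm) auto
      show "AE y in lebesgue. indicator {x<..} y * g y = indicator {x<..} y * h y"
        using hgL by eventually_elim simp
    qed
    also have "\<dots> = 0"
    proof (cases "x < a")
      case True
      then have "(\<lambda>y. indicator {x<..} y * h y) = (\<lambda>y. indicator {a..b} y *\<^sub>R f y)"
        by (auto simp: h_def indicator_def fun_eq_iff)
      moreover have "(LINT y|lebesgue. indicator {a..b} y *\<^sub>R f y) = 0"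
        using z[of b] set_lebesgue_integral_eq_integral(2)[OF fi] ab
        by (simp add: set_lebesgue_integral_def)
      ultimately show ?thesis by simp
    next
      case False
      define m where "m = min x b"
      have mab: "m \<le> b" "a \<le> m" using False ab by (auto simp: m_def)
      have "(\<lambda>y. indicator {x<..} y * h y) = (\<lambda>y. indicator {a..b} y *\<^sub>R f y - indicator {a..m} y *\<^sub>R f y)"
        using False by (auto simp: h_def indicator_def fun_eq_iff m_def)
      moreover have "(LINT y|lebesgue. indicator {a..b} y *\<^sub>R f y) = 0"
        using z[of b] set_lebesgue_integral_eq_integral(2)[OF fi] ab
        by (simp add: set_lebesgue_integral_def)
      moreover have "(LINT y|lebesgue. indicator {a..m} y *\<^sub>R f y) = 0"
        using z[of m] set_lebesgue_integral_eq_integral(2)[OF sub[OF mab(1)]] mab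
        by (simp add: set_lebesgue_integral_def)
      moreover have "integrable lebesgue (\<lambda>y. indicator {a..b} y *\<^sub>R f y)"
        using fi by (simp add: set_integrable_def)
      moreover have "integrable lebesgue (\<lambda>y. indicator {a..m} y *\<^sub>R f y)"
        using sub[OF mab(1)] by (simp add: set_integrable_def)
      ultimately show ?thesis by simp
    qed
    finally show ?thesis .
  qed
  define F1 where "F1 x = ennreal (max 0 (g x))" for x
  define F2 where "F2 x = ennreal (max 0 (- g x))" for x
  have F1m: "F1 \<in> borel_measurable lborel" unfolding F1_def using gb by measurable
  have F2m: "F2 \<in> borel_measurable lborel" unfolding F2_def using gb by measurable
  have i1: "integrable lborel (\<lambda>y. max 0 (g y) * indicator {x<..} y)" for x
  proof -
    have "integrable lborel (\<lambda>y. indicator {x<..} y *\<^sub>R max 0 (g y))"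
      by (intro integrable_mult_indicator integrable_max gi) auto
    then show ?thesis by (simp add: mult.commute)
  qed
  have i2: "integrable lborel (\<lambda>y. max 0 (- g y) * indicator {x<..} y)" for x
  proof -
    have "integrable lborel (\<lambda>y. indicator {x<..} y *\<^sub>R max 0 (- g y))"
      by (intro integrable_mult_indicator integrable_max integrable_minus gi) auto
    then show ?thesis by (simp add: mult.commute)
  qed
  have e1: "emeasure (density lborel F1) {x<..} = ennreal (LINT y|lborel. max 0 (g y) * indicator {x<..} y)" for x
  proof -
    have "emeasure (density lborel F1) {x<..} = (\<integral>\<^sup>+y. F1 y * indicator {x<..} y \<partial>lborel)"
      using F1m by (simp add: emeasure_density)
    also have "\<dots> = (\<integral>\<^sup>+y. ennreal (max 0 (g y) * indicator {x<..} y) \<partial>lborel)"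
      by (intro nn_integral_cong) (auto simp: F1_def indicator_def)
    also have "\<dots> = ennreal (LINT y|lborel. max 0 (g y) * indicator {x<..} y)"
      by (intro nn_integral_eq_integral i1) auto
    finally show ?thesis .
  qed
  have e2: "emeasure (density lborel F2) {x<..} = ennreal (LINT y|lborel. max 0 (- g y) * indicator {x<..} y)" for x
  proof -
    have "emeasure (density lborel F2) {x<..} = (\<integral>\<^sup>+y. F2 y * indicator {x<..} y \<partial>lborel)"
      using F2m by (simp add: emeasure_density)
    also have "\<dots> = (\<integral>\<^sup>+y. ennreal (max 0 (- g y) * indicator {x<..} y) \<partial>lborel)"
      by (intro nn_integral_cong) (auto simp: F2_def indicator_def)
    also have "\<dots> = ennreal (LINT y|lborel. max 0 (- g y) * indicator {x<..} y)"
      by (intro nn_integral_eq_integral i2) auto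
    finally show ?thesis .
  qed
  have "density lborel F1 = density lborel F2"
  proof (rule measure_eqI_lessThan)
    fix x
    show "emeasure (density lborel F1) {x<..} < \<infinity>" using e1 by simp
    have "(LINT y|lborel. max 0 (g y) * indicator {x<..} y) - (LINT y|lborel. max 0 (- g y) * indicator {x<..} y)
       = (LINT y|lborel. indicator {x<..} y * g y)"
    proof -
      have "(LINT y|lborel. max 0 (g y) * indicator {x<..} y) - (LINT y|lborel. max 0 (- g y) * indicator {x<..} y)
         = (LINT y|lborel. max 0 (g y) * indicator {x<..} y - max 0 (- g y) * indicator {x<..} y)"
        by (rule Bochner_Integration.integral_diff[OF i1 i2, symmetric])
      also have "\<dots> = (LINT y|lborel. indicator {x<..} y * g y)"
        by (rule Bochner_Integration.integral_cong) (auto simp: max_def indicator_def)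
      finally show ?thesis .
    qed
    then show "emeasure (density lborel F1) {x<..} = emeasure (density lborel F2) {x<..}"
      using e1 e2 int0 by simp
  qed auto
  then have "AE x in lborel. F1 x = F2 x"
    using sigma_finite_measure.density_unique_iff[OF sigma_finite_lborel F1m F2m] by simp
  then have "AE x in lborel. h x = 0"
    using hg by eventually_elim (auto simp: F1_def F2_def max_def split: if_splits)
  then have "AE x in lebesgue. h x = 0" by (rule AE_completion)
  then obtain N where N: "{x \<in> space lebesgue. \<not> h x = 0} \<subseteq> N" "N \<in> null_sets lebesgue"
    by (rule AE_E) blast
  have "{x\<in>{a..b}. f x \<noteq> 0} \<subseteq> N" using N(1) by (auto simp: h_def)
  moreover have "negligible N" using N(2) by (simp add: negligible_iff_null_sets)
  ultimately show ?thesis by (rule negligible_subset[rotated])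
qed

lemma U_vec:
  fixes d :: "real \<Rightarrow> 'a::euclidean_space"
  assumes ab: "a \<le> b" and di: "d absolutely_integrable_on {a..b}"
    and z: "\<And>s. s \<in> {a..b} \<Longrightarrow> (d has_integral 0) {a..s}"
  shows "negligible {x\<in>{a..b}. d x \<noteq> 0}"
proof -
  have "negligible {x\<in>{a..b}. d x \<bullet> i \<noteq> 0}" if i: "i \<in> Basis" for i
  proof (rule U_real[OF ab])
    show "(\<lambda>x. d x \<bullet> i) absolutely_integrable_on {a..b}" by (rule absolutely_integrable_component) fact
    show "integral {a..s} (\<lambda>x. d x \<bullet> i) = 0" if "s \<in> {a..b}" for s
      using z[OF that] integral_component_eq[of d "{a..s}" i]
      by (simp add: has_integral_integrable integral_unique)
  qed
  then have "negligible (\<Union>i\<in>Basis. {x\<in>{a..b}. d x \<bullet> i \<noteq> 0})" by (intro negligible_Union) auto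
  moreover have "{x\<in>{a..b}. d x \<noteq> 0} \<subseteq> (\<Union>i\<in>Basis. {x\<in>{a..b}. d x \<bullet> i \<noteq> 0})"
    using euclidean_eq_iff[where 'a='a] by auto
  ultimately show ?thesis by (rule negligible_subset)
qed

lemma le_1_plus_sq: "(r::real) \<ge> 0 \<Longrightarrow> r \<le> 1 + r\<^sup>2"
proof -
  assume r: "r \<ge> 0"
  have "0 \<le> (r - 1)\<^sup>2" by simp
  then show ?thesis using r by (simp add: power2_eq_square algebra_simps)
qed

lemma L2_abs:
  fixes D :: "real \<Rightarrow> 'a::euclidean_space"
  assumes "D integrable_on {a..b}" "(\<lambda>s. (norm (D s))\<^sup>2) integrable_on {a..b}"
  shows "D absolutely_integrable_on {a..b}"
proof (rule measurable_bounded_by_integrable_imp_absolutely_integrable)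
  show "D \<in> borel_measurable (lebesgue_on {a..b})"
    using integrable_imp_measurable[OF assms(1)] measurable_on_iff_borel_measurable by blast
  show "(\<lambda>s. 1 + (norm (D s))\<^sup>2) integrable_on {a..b}"
    by (intro integrable_add assms(2) integrable_const_ivl)
  show "norm (D x) \<le> 1 + (norm (D x))\<^sup>2" for x by (rule le_1_plus_sq) simp
qed auto


definition H1w :: "(real \<Rightarrow> 'a::euclidean_space) \<Rightarrow> (real \<Rightarrow> 'a) \<Rightarrow> real \<Rightarrow> bool" where
 "H1w D V T \<longleftrightarrow> (\<forall>s\<in>{0..T}. (D has_integral (V s - V 0)) {0..s}) \<and> (\<lambda>s. (norm (D s))\<^sup>2) integrable_on {0..T}"

lemma H1_iff: "H1 0 T V \<longleftrightarrow> (\<exists>D. H1w D V T)"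
  by (simp add: H1_def H1w_def)

lemma H1deriv_w: assumes "H1w D V T" shows "H1w (H1deriv 0 T V) V T"
proof -
  have "\<exists>D. H1w D V T" using assms by blast
  then show ?thesis unfolding H1deriv_def H1w_def by (rule someI_ex)
qed

lemma H1w_int: assumes "H1w D V T" "T \<ge> 0" shows "D integrable_on {0..T}"
proof -
  have "(D has_integral V T - V 0) {0..T}" using assms unfolding H1w_def by auto
  then show ?thesis by (rule has_integral_integrable)
qed

lemma H1w_eq: assumes "H1w D V T" "s \<in> {0..T}" shows "V s = V 0 + integral {0..s} D"
proof -
  have "(D has_integral V s - V 0) {0..s}" using assms by (auto simp: H1w_def)
  then have "integral {0..s} D = V s - V 0" by (rule integral_unique)
  then show ?thesis by (simp add: algebra_simps)
qed

lemma H1w_cont: assumes "H1w D V T" shows "continuous_on {0..T} V"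
proof (cases "T \<ge> 0")
  case True
  have "continuous_on {0..T} (\<lambda>s. V 0 + integral {0..s} D)"
    by (intro continuous_intros indefinite_integral_continuous_1 H1w_int[OF assms True])
  then show ?thesis
    by (rule continuous_on_eq) (rule H1w_eq[OF assms, symmetric])
qed auto

lemma H1w_unique:
  assumes "T \<ge> 0" "H1w D1 V T" "H1w D2 V T"
  shows "negligible {s\<in>{0..T}. D1 s \<noteq> D2 s}"
proof -
  have "negligible {s\<in>{0..T}. D1 s - D2 s \<noteq> 0}"
  proof (rule U_vec[OF assms(1)])
    show "(\<lambda>s. D1 s - D2 s) absolutely_integrable_on {0..T}"
    proof (rule set_integral_diff(1))
      show "D1 absolutely_integrable_on {0..T}"
        by (rule L2_abs[OF H1w_int[OF assms(2,1)]]) (use assms(2) in \<open>simp add: H1w_def\<close>)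
      show "D2 absolutely_integrable_on {0..T}"
        by (rule L2_abs[OF H1w_int[OF assms(3,1)]]) (use assms(3) in \<open>simp add: H1w_def\<close>)
    qed
    show "((\<lambda>s. D1 s - D2 s) has_integral 0) {0..s}" if "s \<in> {0..T}" for s
    proof -
      have "(D1 has_integral V s - V 0) {0..s}" "(D2 has_integral V s - V 0) {0..s}"
        using assms(2,3) that unfolding H1w_def by blast+
      from has_integral_diff[OF this] show ?thesis by simp
    qed
  qed
  then show ?thesis by simp
qed

lemma has_integral_scale:
  fixes k :: "real \<Rightarrow> 'a::euclidean_space"
  assumes "(k has_integral I) {0..b}" "\<tau> > 0"
  shows "((\<lambda>s. k (s/\<tau>)) has_integral \<tau> *\<^sub>R I) {0..\<tau>*b}"
proof -
  have "((\<lambda>x. k ((1/\<tau>) *\<^sub>R x + 0)) has_integral I /\<^sub>R (1/\<tau>) ^ DIM(real))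
          (cbox ((0 - 0) /\<^sub>R (1/\<tau>)) ((b - 0) /\<^sub>R (1/\<tau>)))"
    using has_integral_affinity_iff[where m="1/\<tau>" and c=0 and f=k and I=I and a=0 and b=b] assms
    by simp
  then show ?thesis using assms by (simp add: divide_inverse mult.commute)
qed

lemma phi_H1w:
  assumes "\<tau> > 0" "H1w D V 1"
  shows "H1w (\<lambda>s. (1/\<tau>) *\<^sub>R D (s/\<tau>)) (phi \<tau> V) \<tau>"
  unfolding H1w_def
proof safe
  fix s assume s: "s \<in> {0..\<tau>}"
  then have "s/\<tau> \<in> {0..1}" using assms(1) by auto
  then have "(D has_integral (V (s/\<tau>) - V 0)) {0..s/\<tau>}" using assms(2) by (auto simp: H1w_def)
  from has_integral_scale[OF this assms(1)]
  have "((\<lambda>x. D (x/\<tau>)) has_integral \<tau> *\<^sub>R (V (s/\<tau>) - V 0)) {0..s}" using assms(1) by simp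
  from has_integral_cmul[OF this, of "1/\<tau>"]
  show "((\<lambda>s. (1/\<tau>) *\<^sub>R D (s/\<tau>)) has_integral phi \<tau> V s - phi \<tau> V 0) {0..s}"
    using assms(1) by (simp add: phi_def)
next
  have "((\<lambda>s. (norm (D s))\<^sup>2) has_integral integral {0..1} (\<lambda>s. (norm (D s))\<^sup>2)) {0..1}"
    using assms(2) by (auto simp: H1w_def)
  from has_integral_scale[OF this assms(1)]
  have "(\<lambda>x. (norm (D (x/\<tau>)))\<^sup>2) integrable_on {0..\<tau>}" by (auto simp: integrable_on_def)
  then have "(\<lambda>x. (1/\<tau>)\<^sup>2 * (norm (D (x/\<tau>)))\<^sup>2) integrable_on {0..\<tau>}"
    using assms(1) by simp
  moreover have "(\<lambda>s. (norm ((1/\<tau>) *\<^sub>R D (s/\<tau>)))\<^sup>2) = (\<lambda>x. (1/\<tau>)\<^sup>2 * (norm (D (x/\<tau>)))\<^sup>2)"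
    using assms(1) by (auto simp: fun_eq_iff power_divide)
  ultimately show "(\<lambda>s. (norm ((1/\<tau>) *\<^sub>R D (s/\<tau>)))\<^sup>2) integrable_on {0..\<tau>}"
    by simp
qed

lemma pq_le: "(p::real) \<ge> 0 \<Longrightarrow> q \<ge> 0 \<Longrightarrow> p * q \<le> p\<^sup>2 + q\<^sup>2"
proof -
  assume "p \<ge> 0" "q \<ge> 0"
  moreover have "0 \<le> (p - q)\<^sup>2" by simp
  moreover have "0 \<le> p * q" using calculation by simp
  moreover have "2 * (p * q) \<le> p\<^sup>2 + q\<^sup>2" using calculation(3) by (simp add: power2_eq_square algebra_simps)
  ultimately show ?thesis by linarith
qed

lemma ivl_sets: "{a..b::real} \<in> sets lebesgue"
  by (metis box_real(2) fmeasurableD lmeasurable_cbox)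

lemma g_int:
  fixes g :: "'a::euclidean_space \<Rightarrow> 'a \<Rightarrow> real" and D1 D2 :: "real \<Rightarrow> 'a"
  assumes gb: "bilinear g" and i1: "D1 integrable_on {a..b}" "(\<lambda>s. (norm (D1 s))\<^sup>2) integrable_on {a..b}"
    and i2: "D2 integrable_on {a..b}" "(\<lambda>s. (norm (D2 s))\<^sup>2) integrable_on {a..b}"
  shows "(\<lambda>s. g (D1 s) (D2 s)) integrable_on {a..b}"
proof -
  obtain B where B: "B > 0" "\<And>x y. norm (g x y) \<le> B * norm x * norm y"
    using bilinear_bounded_pos[OF gb] by blast
  show ?thesis
  proof (rule measurable_bounded_by_integrable_imp_integrable)
    show "(\<lambda>s. g (D1 s) (D2 s)) \<in> borel_measurable (lebesgue_on {a..b})"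
      by (rule borel_measurable_bilinear[OF gb integrable_imp_measurable[OF i1(1)] integrable_imp_measurable[OF i2(1)]])
        (rule ivl_sets)
    have "(\<lambda>s. (norm (D1 s))\<^sup>2 + (norm (D2 s))\<^sup>2) integrable_on {a..b}"
      by (rule integrable_add) (fact i1(2), fact i2(2))
    then show "(\<lambda>s. B * ((norm (D1 s))\<^sup>2 + (norm (D2 s))\<^sup>2)) integrable_on {a..b}"
      using B(1) by simp
    show "norm (g (D1 x) (D2 x)) \<le> B * ((norm (D1 x))\<^sup>2 + (norm (D2 x))\<^sup>2)" for x
    proof -
      have "norm (g (D1 x) (D2 x)) \<le> B * (norm (D1 x) * norm (D2 x))" using B(2) by (simp add: mult.assoc)
      also have "\<dots> \<le> B * ((norm (D1 x))\<^sup>2 + (norm (D2 x))\<^sup>2)"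
        using B(1) pq_le[of "norm (D1 x)" "norm (D2 x)"] by (intro mult_left_mono) auto
      finally show ?thesis .
    qed
  qed (rule ivl_sets)
qed

lemma mv_bilinear: "bilinear (\<lambda>(M::real^'n^'m) v. M *v v)"
  unfolding bilinear_def
proof safe
  fix M :: "real^'n^'m" show "linear ((*v) M)" by (rule matrix_vector_mul_linear)
next
  fix v :: "real^'n" show "linear (\<lambda>M::real^'n^'m. M *v v)"
    by (rule linearI) (simp_all add: matrix_vector_mult_add_rdistrib scaleR_matrix_vector_assoc)
qed

lemma L1:
  fixes g :: "real^'n \<Rightarrow> real^'n \<Rightarrow> real" and R :: "real \<Rightarrow> real^'n^'n"
  assumes gb: "bilinear g" and tau: "0 < \<tau>" "\<tau> \<le> 1" and cR: "continuous_on {0..1} R"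
    and hV: "H1w Dv V 1" and hX: "H1w Dx X 1"
  shows "Ihat g R S \<tau> V X = integral {0..1} (\<lambda>u. g (Dv u) (Dx u) / \<tau> + \<tau> * g (R (\<tau>*u) *v V u) (X u))
            - g (S (V 0)) (X 0)"
proof -
  define Ev where "Ev s = (1/\<tau>) *\<^sub>R Dv (s/\<tau>)" for s
  define Ex where "Ex s = (1/\<tau>) *\<^sub>R Dx (s/\<tau>)" for s
  have hEv: "H1w Ev (phi \<tau> V) \<tau>" using phi_H1w[OF tau(1) hV] unfolding Ev_def .
  have hEx: "H1w Ex (phi \<tau> X) \<tau>" using phi_H1w[OF tau(1) hX] unfolding Ex_def .
  define E'v where "E'v = H1deriv 0 \<tau> (phi \<tau> V)"
  define E'x where "E'x = H1deriv 0 \<tau> (phi \<tau> X)"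
  have hE'v: "H1w E'v (phi \<tau> V) \<tau>" using H1deriv_w[OF hEv] by (simp add: E'v_def)
  have hE'x: "H1w E'x (phi \<tau> X) \<tau>" using H1deriv_w[OF hEx] by (simp add: E'x_def)
  have nv: "negligible {s\<in>{0..\<tau>}. E'v s \<noteq> Ev s}" by (rule H1w_unique[OF _ hE'v hEv]) (use tau in auto)
  have nx: "negligible {s\<in>{0..\<tau>}. E'x s \<noteq> Ex s}" by (rule H1w_unique[OF _ hE'x hEx]) (use tau in auto)
  define k where "k u = (1/\<tau>\<^sup>2) * g (Dv u) (Dx u) + g (R (\<tau>*u) *v V u) (X u)" for u
  have gi: "(\<lambda>u. g (Dv u) (Dx u)) integrable_on {0..1}"
    by (rule g_int[OF gb H1w_int[OF hV zero_le_one] _ H1w_int[OF hX zero_le_one]])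
      (use hV hX in \<open>auto simp: H1w_def\<close>)
  have cc: "continuous_on {0..1} (\<lambda>u. g (R (\<tau>*u) *v V u) (X u))"
  proof -
    have "continuous_on {0..1} (\<lambda>u. R (\<tau>*u))"
      by (rule continuous_on_compose2[OF cR]) (use tau in \<open>auto intro!: continuous_intros simp: mult_le_one\<close>)
    then have "continuous_on {0..1} (\<lambda>u. R (\<tau>*u) *v V u)"
      using H1w_cont[OF hV] by (rule bilinear_continuous_on_compose[OF _ _ mv_bilinear])
    then show ?thesis
      using H1w_cont[OF hX] by (rule bilinear_continuous_on_compose[OF _ _ gb])
  qed
  have kint: "k integrable_on {0..1}"
    using integrable_add[OF integrable_on_cmult_left[OF gi, of "1/\<tau>\<^sup>2"] integrable_continuous_real[OF cc]]
    unfolding k_def by simp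
  have "((\<lambda>s. k (s/\<tau>)) has_integral \<tau> *\<^sub>R integral {0..1} k) {0..\<tau>*1}"
    by (rule has_integral_scale[OF integrable_integral[OF kint] tau(1)])
  then have int1: "integral {0..\<tau>} (\<lambda>s. k (s/\<tau>)) = \<tau> * integral {0..1} k"
    by (simp add: integral_unique)
  have "Ihat g R S \<tau> V X = integral {0..\<tau>} (\<lambda>s. g (E'v s) (E'x s) + g (R s *v phi \<tau> V s) (phi \<tau> X s))
           - g (S (phi \<tau> V 0)) (phi \<tau> X 0)"
    by (simp add: Ihat_def Iform_def E'v_def E'x_def)
  also have "integral {0..\<tau>} (\<lambda>s. g (E'v s) (E'x s) + g (R s *v phi \<tau> V s) (phi \<tau> X s))
      = integral {0..\<tau>} (\<lambda>s. k (s/\<tau>))"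
  proof (rule integral_spike[where S = "{s\<in>{0..\<tau>}. E'v s \<noteq> Ev s} \<union> {s\<in>{0..\<tau>}. E'x s \<noteq> Ex s}"])
    show "negligible ({s\<in>{0..\<tau>}. E'v s \<noteq> Ev s} \<union> {s\<in>{0..\<tau>}. E'x s \<noteq> Ex s})"
      using nv nx by (rule negligible_Un)
    fix s assume "s \<in> {0..\<tau>} - ({s\<in>{0..\<tau>}. E'v s \<noteq> Ev s} \<union> {s\<in>{0..\<tau>}. E'x s \<noteq> Ex s})"
    then have e: "E'v s = Ev s" "E'x s = Ex s" by auto
    show "k (s/\<tau>) = g (E'v s) (E'x s) + g (R s *v phi \<tau> V s) (phi \<tau> X s)"
      using tau unfolding e
      by (simp add: k_def Ev_def Ex_def phi_def bilinear_lmul[OF gb] bilinear_rmul[OF gb] power2_eq_square)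
  qed
  also have "\<tau> * integral {0..1} k = integral {0..1} (\<lambda>u. g (Dv u) (Dx u) / \<tau> + \<tau> * g (R (\<tau>*u) *v V u) (X u))"
  proof -
    have "\<tau> * integral {0..1} k = integral {0..1} (\<lambda>u. \<tau> * k u)"
      by (rule integral_mult[OF kint])
    also have "\<dots> = integral {0..1} (\<lambda>u. g (Dv u) (Dx u) / \<tau> + \<tau> * g (R (\<tau>*u) *v V u) (X u))"
      using tau by (intro integral_cong) (simp add: k_def algebra_simps power2_eq_square)
    finally show ?thesis .
  qed
  ultimately show ?thesis using int1 by (simp add: phi_def)
qed

lemma pw_deriv:
  fixes c1 c2 :: "'a::euclidean_space"
  assumes "x \<noteq> a"
  shows "((\<lambda>u. min u a *\<^sub>R c1 + (u - min u a) *\<^sub>R c2) has_vector_derivative (if x \<le> a then c1 else c2)) (at x)"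
proof (cases "x < a")
  case True
  have "((\<lambda>u. u *\<^sub>R c1) has_vector_derivative c1) (at x)"
    by (auto intro!: derivative_eq_intros)
  then have "((\<lambda>u. min u a *\<^sub>R c1 + (u - min u a) *\<^sub>R c2) has_vector_derivative c1) (at x)"
  proof (rule has_vector_derivative_transform_within_open[where S="{..<a}"])
    fix y assume "y \<in> {..<a}" then show "y *\<^sub>R c1 = min y a *\<^sub>R c1 + (y - min y a) *\<^sub>R c2" by simp
  qed (use True in auto)
  then show ?thesis using True by simp
next
  case False
  then have xa: "a < x" using assms by auto
  have "((\<lambda>u. a *\<^sub>R c1 + (u - a) *\<^sub>R c2) has_vector_derivative c2) (at x)"
    by (auto intro!: derivative_eq_intros)
  then have "((\<lambda>u. min u a *\<^sub>R c1 + (u - min u a) *\<^sub>R c2) has_vector_derivative c2) (at x)"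
  proof (rule has_vector_derivative_transform_within_open[where S="{a<..}"])
    fix y assume "y \<in> {a<..}" then show "a *\<^sub>R c1 + (y - a) *\<^sub>R c2 = min y a *\<^sub>R c1 + (y - min y a) *\<^sub>R c2" by simp
  qed (use xa in auto)
  then show ?thesis using xa by simp
qed

lemma pw_ftc:
  fixes c1 c2 :: "'a::euclidean_space"
  assumes a: "0 \<le> a" and s: "0 \<le> s"
  shows "((\<lambda>u. if u \<le> a then c1 else c2) has_integral (min s a *\<^sub>R c1 + (s - min s a) *\<^sub>R c2)) {0..s}"
proof -
  define Pr where "Pr u = min u a *\<^sub>R c1 + (u - min u a) *\<^sub>R c2" for u
  have "((\<lambda>u. if u \<le> a then c1 else c2) has_integral Pr s - Pr 0) {0..s}"
  proof (rule fundamental_theorem_of_calculus_interior_strong[where S="{a}"])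
    show "continuous_on {0..s} Pr" unfolding Pr_def by (intro continuous_intros)
    fix x assume x: "x \<in> {0<..<s} - {a}"
    then show "(Pr has_vector_derivative (if x \<le> a then c1 else c2)) (at x)"
      unfolding Pr_def by (intro pw_deriv) auto
  qed (use s in auto)
  then show ?thesis using a by (simp add: Pr_def)
qed

lemma Xa_H1w:
  fixes y :: "'a::euclidean_space"
  assumes a: "0 \<le> a" "a \<le> 1"
  shows "H1w (\<lambda>u. if u \<le> a then (1 - a) *\<^sub>R y else (- a) *\<^sub>R y)
             (\<lambda>u. min u a *\<^sub>R ((1 - a) *\<^sub>R y) + (u - min u a) *\<^sub>R ((- a) *\<^sub>R y)) 1"
  unfolding H1w_def
proof safe
  fix s :: real assume s: "s \<in> {0..1}"
  show "((\<lambda>u. if u \<le> a then (1 - a) *\<^sub>R y else (- a) *\<^sub>R y) has_integral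
         (min s a *\<^sub>R ((1 - a) *\<^sub>R y) + (s - min s a) *\<^sub>R ((- a) *\<^sub>R y)) -
         (min 0 a *\<^sub>R ((1 - a) *\<^sub>R y) + (0 - min 0 a) *\<^sub>R ((- a) *\<^sub>R y))) {0..s}"
    using pw_ftc[OF a(1), of s "(1 - a) *\<^sub>R y" "(- a) *\<^sub>R y"] s a by simp
next
  have "((\<lambda>u. if u \<le> a then (norm ((1 - a) *\<^sub>R y))\<^sup>2 else (norm ((- a) *\<^sub>R y))\<^sup>2) has_integral
          (min 1 a *\<^sub>R (norm ((1 - a) *\<^sub>R y))\<^sup>2 + (1 - min 1 a) *\<^sub>R (norm ((- a) *\<^sub>R y))\<^sup>2)) {0..1}"
    by (rule pw_ftc[OF a(1)]) simp
  then have "(\<lambda>u. if u \<le> a then (norm ((1 - a) *\<^sub>R y))\<^sup>2 else (norm ((- a) *\<^sub>R y))\<^sup>2) integrable_on {0..1}"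
    by (rule has_integral_integrable)
  moreover have "(\<lambda>u. (norm (if u \<le> a then (1 - a) *\<^sub>R y else (- a) *\<^sub>R y))\<^sup>2) =
      (\<lambda>u. if u \<le> a then (norm ((1 - a) *\<^sub>R y))\<^sup>2 else (norm ((- a) *\<^sub>R y))\<^sup>2)"
    by (simp add: fun_eq_iff)
  ultimately show "(\<lambda>u. (norm (if u \<le> a then (1 - a) *\<^sub>R y else (- a) *\<^sub>R y))\<^sup>2) integrable_on {0..1}"
    by simp
qed

lemma regularity:
  fixes g :: "real^'n \<Rightarrow> real^'n \<Rightarrow> real" and R :: "real \<Rightarrow> real^'n^'n"
  assumes gb: "bilinear g" and gnd: "\<forall>x. (\<forall>y. g x y = 0) \<longrightarrow> x = 0"
    and tau: "0 < t" "t \<le> 1" and cR: "continuous_on {0..1} R"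
    and Psub: "subspace P" and hV: "H1w Dv V 1"
    and ker: "\<And>X. X \<in> Hsp P 1 \<Longrightarrow> Ihat g R S t V X = 0"
    and Qdef: "Q = (\<lambda>u. (t*t) *\<^sub>R (R (t*u) *v V u))"
    and Fdef: "F = (\<lambda>u. integral {0..u} Q)"
  shows "\<exists>C. \<forall>a\<in>{0..1}. V a = V 0 + integral {0..a} F + a *\<^sub>R C"
proof -
  have cQ: "continuous_on {0..1} Q"
  proof -
    have "continuous_on {0..1} (\<lambda>u. R (t*u))"
      by (rule continuous_on_compose2[OF cR]) (use tau in \<open>auto intro!: continuous_intros simp: mult_le_one\<close>)
    then have "continuous_on {0..1} (\<lambda>u. R (t*u) *v V u)"
      using H1w_cont[OF hV] by (rule bilinear_continuous_on_compose[OF _ _ mv_bilinear])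
    then show ?thesis unfolding Qdef by (intro continuous_intros)
  qed
  have dF: "(F has_vector_derivative Q x) (at x within {0..1})" if "x \<in> {0..1}" for x
    unfolding Fdef by (rule integral_has_vector_derivative[OF cQ that])
  have cF: "continuous_on {0..1} F" by (rule continuous_on_vector_derivative[OF dF])
  have Fi: "F integrable_on {0..s}" if "s \<in> {0..1}" for s
    by (rule integrable_continuous_real) (rule continuous_on_subset[OF cF], use that in auto)
  have Dvi: "Dv integrable_on {0..s}" if "s \<in> {0..1}" for s
    using hV that unfolding H1w_def by (auto intro: has_integral_integrable)
  have bbg: "bounded_bilinear g" using gb by (simp add: bilinear_conv_bounded_bilinear)
  have blg: "bounded_linear (\<lambda>z. g z y)" for y
    using gb by (simp add: bilinear_def linear_conv_bounded_linear)
  define G where "G s = integral {0..s} F" for s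
  define H where "H s = V s - V 0 - G s" for s
  have key: "g (H a) y = a * g (H 1) y" if a: "a \<in> {0..1}" for a y
  proof -
    define c1 where "c1 = (1 - a) *\<^sub>R y"
    define c2 where "c2 = (- a) *\<^sub>R y"
    define X where "X u = min u a *\<^sub>R c1 + (u - min u a) *\<^sub>R c2" for u
    define Dx where "Dx u = (if u \<le> a then c1 else c2)" for u
    have hX: "H1w Dx X 1" using Xa_H1w[of a y] a unfolding X_def Dx_def c1_def c2_def by auto
    have X0: "X 0 = 0" using a by (simp add: X_def)
    have X1: "X 1 = 0" using a by (simp add: X_def c1_def c2_def algebra_simps)
    have "X \<in> Hsp P 1" unfolding Hsp_def using hX X0 X1 H1_iff subspace_0[OF Psub] by auto
    then have "Ihat g R S t V X = 0" by (rule ker)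
    then have eq0: "integral {0..1} (\<lambda>u. g (Dv u) (Dx u) / t + t * g (R (t*u) *v V u) (X u)) = 0"
      using L1[OF gb tau cR hV hX] X0 bilinear_rzero[OF gb] by simp
    define f1 where "f1 u = g (Dv u) (Dx u)" for u
    define f2 where "f2 u = g (Q u) (X u)" for u
    define f3 where "f3 u = g (F u) (Dx u)" for u
    have f1i: "f1 integrable_on {0..1}"
      unfolding f1_def
      by (rule g_int[OF gb H1w_int[OF hV zero_le_one] _ H1w_int[OF hX zero_le_one]])
        (use hV hX in \<open>auto simp: H1w_def\<close>)
    have cX: "continuous_on {0..1} X" by (rule H1w_cont[OF hX])
    have f2c: "continuous_on {0..1} f2"
      unfolding f2_def using cQ cX by (rule bilinear_continuous_on_compose[OF _ _ gb])
    have f2i: "f2 integrable_on {0..1}" by (rule integrable_continuous_real[OF f2c])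
    have "(\<lambda>u. g (Dv u) (Dx u) / t + t * g (R (t*u) *v V u) (X u)) = (\<lambda>u. (f1 u + f2 u) / t)"
      using tau by (auto simp: fun_eq_iff f1_def f2_def Qdef bilinear_lmul[OF gb] field_simps)
    with eq0 have "integral {0..1} (\<lambda>u. (f1 u + f2 u) / t) = 0" by simp
    then have "(integral {0..1} f1 + integral {0..1} f2) / t = 0"
      using integral_add[OF f1i f2i] integrable_add[OF f1i f2i]
      by (simp add: integral_divide)
    then have s12: "integral {0..1} f1 + integral {0..1} f2 = 0" using tau by simp
    \<comment> \<open>integration by parts\<close>
    have "((\<lambda>u. f3 u + f2 u) has_integral g (F 1) (X 1) - g (F 0) (X 0)) {0..1}"
    proof (rule fundamental_theorem_of_calculus_interior_strong[where S="{a}"])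
      show "continuous_on {0..1} (\<lambda>u. g (F u) (X u))"
        using cF cX by (rule bilinear_continuous_on_compose[OF _ _ gb])
      fix x assume x: "x \<in> {0<..<1} - {a}"
      have "(F has_vector_derivative Q x) (at x)"
        using dF[of x] x by (simp add: at_within_interior[of x "{0..1}"])
      moreover have "(X has_vector_derivative Dx x) (at x)"
        unfolding X_def Dx_def by (rule pw_deriv) (use x in auto)
      ultimately show "((\<lambda>u. g (F u) (X u)) has_vector_derivative f3 x + f2 x) (at x)"
        unfolding f3_def f2_def by (rule bounded_bilinear.has_vector_derivative[OF bbg])
    qed auto
    then have s32: "((\<lambda>u. f3 u + f2 u) has_integral 0) {0..1}"
      using X0 X1 bilinear_rzero[OF gb] by simp
    have f3i: "f3 integrable_on {0..1}"
    proof -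
      have "(\<lambda>u. (f3 u + f2 u) - f2 u) integrable_on {0..1}"
        using s32 f2i by (intro integrable_diff) (auto intro: has_integral_integrable)
      then show ?thesis by simp
    qed
    have "integral {0..1} f3 + integral {0..1} f2 = 0"
      using s32 integral_add[OF f3i f2i] by (simp add: integral_unique)
    with s12 have "integral {0..1} (\<lambda>u. f1 u - f3 u) = 0"
      using integral_diff[OF f1i f3i] by simp
    define h where "h u = Dv u - F u" for u
    define l where "l u = g (h u) y" for u
    have hi: "h integrable_on {0..s}" if "s \<in> {0..1}" for s
      unfolding h_def using Dvi[OF that] Fi[OF that] by (rule integrable_diff)
    have li: "l integrable_on {0..s}" if "s \<in> {0..1}" for s
      using integrable_linear[OF hi[OF that] blg[of y]] unfolding l_def o_def .
    have lint: "integral {0..s} l = g (H s) y" if s: "s \<in> {0..1}" for s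
    proof -
      have "integral {0..s} l = g (integral {0..s} h) y"
        using integral_linear[OF hi[OF s] blg[of y]] unfolding l_def o_def .
      also have "integral {0..s} h = integral {0..s} Dv - integral {0..s} F"
        unfolding h_def by (rule integral_diff[OF Dvi[OF s] Fi[OF s]])
      also have "integral {0..s} Dv = V s - V 0" using H1w_eq[OF hV s] by simp
      finally show ?thesis by (simp add: H_def G_def)
    qed
    have "(\<lambda>u. f1 u - f3 u) = (\<lambda>u. (if u \<in> {..a} then l u else 0) - a * l u)"
      by (auto simp: fun_eq_iff f1_def f3_def Dx_def l_def h_def c1_def c2_def
          bilinear_lsub[OF gb, symmetric] bilinear_rmul[OF gb] bilinear_rsub[OF gb] bilinear_rneg[OF gb] algebra_simps)
    then have "integral {0..1} (\<lambda>u. (if u \<in> {..a} then l u else 0) - a * l u) = 0"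
      using \<open>integral {0..1} (\<lambda>u. f1 u - f3 u) = 0\<close> by simp
    moreover have "integral {0..1} (\<lambda>u. (if u \<in> {..a} then l u else 0) - a * l u)
        = integral {0..a} l - a * integral {0..1} l"
    proof -
      have ia: "{..a} \<inter> {0..1} = {0..a}" using a by auto
      have r: "integral {0..1} (\<lambda>u. if u \<in> {..a} then l u else 0) = integral {0..a} l"
        by (simp only: integral_restrict_Int ia)
      have ri: "(\<lambda>u. if u \<in> {..a} then l u else 0) integrable_on {0..1}"
        using li[OF a] by (simp only: integrable_restrict_Int ia)
      show ?thesis
        using integral_diff[OF ri integrable_on_cmult_left[OF li[of 1], of a]] r by simp
    qed
    ultimately show ?thesis using lint[OF a] lint[of 1] by simp
  qed
  have "H a = a *\<^sub>R H 1" if a: "a \<in> {0..1}" for a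
  proof -
    have "\<forall>y. g (H a - a *\<^sub>R H 1) y = 0"
      using key[OF a] by (simp add: bilinear_lsub[OF gb] bilinear_lmul[OF gb])
    then show ?thesis using gnd by auto
  qed
  then show ?thesis by (intro exI[of _ "H 1"]) (auto simp: H_def G_def algebra_simps)
qed

lemma final_identity:
  fixes g :: "real^'n \<Rightarrow> real^'n \<Rightarrow> real" and R R' :: "real \<Rightarrow> real^'n^'n"
    and V V' W W' :: "real \<Rightarrow> real^'n"
  assumes gb: "bilinear g"
    and Rsym: "\<And>s x y. s \<in> {0..1} \<Longrightarrow> g (R s *v x) y = g x (R s *v y)"
    and tau: "0 < t" "t \<le> 1"
    and dR: "\<And>s. s \<in> {0..1} \<Longrightarrow> (R has_vector_derivative R' s) (at s within {0..1})"
    and dV: "\<And>x. x \<in> {0..1} \<Longrightarrow> (V has_vector_derivative V' x) (at x within {0..1})"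
    and dV': "\<And>x. x \<in> {0..1} \<Longrightarrow> (V' has_vector_derivative (t*t) *\<^sub>R (R (t*x) *v V x)) (at x within {0..1})"
    and dW: "\<And>x. x \<in> {0..1} \<Longrightarrow> (W has_vector_derivative W' x) (at x within {0..1})"
    and dW': "\<And>x. x \<in> {0..1} \<Longrightarrow> (W' has_vector_derivative (t*t) *\<^sub>R (R (t*x) *v W x)) (at x within {0..1})"
    and W1: "W 1 = 0"
  shows "((\<lambda>u. - g (V' u) (W' u) / t\<^sup>2 + g (R (t*u) *v V u) (W u) + t * (u * g (R' (t*u) *v V u) (W u)))
            has_integral - g (V' 1) (W' 1) / t\<^sup>2) {0..1}"
proof -
  have bbg: "bounded_bilinear g" using gb by (simp add: bilinear_conv_bounded_bilinear)
  have bbm: "bounded_bilinear (\<lambda>(M::real^'n^'n) v. M *v v)"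
    using mv_bilinear by (simp add: bilinear_conv_bounded_bilinear)
  define A where "A u = g (R (t*u) *v V u) (W u)" for u
  define B where "B u = g (V' u) (W' u)" for u
  define \<Psi> where "\<Psi> u = u * A u - u * B u / t\<^sup>2" for u
  have d\<Psi>: "(\<Psi> has_vector_derivative
      (- g (V' u) (W' u) / t\<^sup>2 + g (R (t*u) *v V u) (W u) + t * (u * g (R' (t*u) *v V u) (W u))))
      (at u within {0..1})" if u: "u \<in> {0..1}" for u
  proof -
    have tu: "t * u \<in> {0..1}" using u tau by (auto simp: mult_le_one)
    have "((\<lambda>u. t*u) has_real_derivative t) (at u within {0..1})"
      by (auto intro!: derivative_eq_intros)
    then have d1: "((\<lambda>u. t*u) has_vector_derivative t) (at u within {0..1})"
      by (simp add: has_real_derivative_iff_has_vector_derivative)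
    have "(R has_vector_derivative R' (t*u)) (at (t*u) within (\<lambda>u. t*u) ` {0..1})"
      by (rule has_vector_derivative_within_subset[OF dR[OF tu]]) (use tau in \<open>auto simp: mult_le_one\<close>)
    from vector_diff_chain_within[OF d1 this]
    have dRt: "((\<lambda>u. R (t*u)) has_vector_derivative t *\<^sub>R R' (t*u)) (at u within {0..1})"
      by (simp add: o_def)
    have dRV: "((\<lambda>u. R (t*u) *v V u) has_vector_derivative
        R (t*u) *v V' u + (t *\<^sub>R R' (t*u)) *v V u) (at u within {0..1})"
      using bounded_bilinear.has_vector_derivative[OF bbm dRt dV[OF u]] by simp
    have dA: "(A has_vector_derivative
        g (R (t*u) *v V u) (W' u) + g (R (t*u) *v V' u + (t *\<^sub>R R' (t*u)) *v V u) (W u)) (at u within {0..1})"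
      unfolding A_def by (rule bounded_bilinear.has_vector_derivative[OF bbg dRV dW[OF u]])
    have dB: "(B has_vector_derivative
        g (V' u) ((t*t) *\<^sub>R (R (t*u) *v W u)) + g ((t*t) *\<^sub>R (R (t*u) *v V u)) (W' u)) (at u within {0..1})"
      unfolding B_def by (rule bounded_bilinear.has_vector_derivative[OF bbg dV'[OF u] dW'[OF u]])
    have did: "((\<lambda>u. u) has_vector_derivative 1) (at u within {0..1})"
      by (rule has_vector_derivative_id)
    have duA: "((\<lambda>u. u * A u) has_vector_derivative
        u * (g (R (t*u) *v V u) (W' u) + g (R (t*u) *v V' u + (t *\<^sub>R R' (t*u)) *v V u) (W u)) + 1 * A u)
        (at u within {0..1})"
      by (rule bounded_bilinear.has_vector_derivative[OF bounded_bilinear_mult did dA])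
    have duB: "((\<lambda>u. u * B u) has_vector_derivative
        u * (g (V' u) ((t*t) *\<^sub>R (R (t*u) *v W u)) + g ((t*t) *\<^sub>R (R (t*u) *v V u)) (W' u)) + 1 * B u)
        (at u within {0..1})"
      by (rule bounded_bilinear.has_vector_derivative[OF bounded_bilinear_mult did dB])
    have duB2: "((\<lambda>u. u * B u / t\<^sup>2) has_vector_derivative
        (u * (g (V' u) ((t*t) *\<^sub>R (R (t*u) *v W u)) + g ((t*t) *\<^sub>R (R (t*u) *v V u)) (W' u)) + 1 * B u) / t\<^sup>2)
        (at u within {0..1})"
      using duB unfolding has_real_derivative_iff_has_vector_derivative[symmetric]
      by (rule DERIV_cdivide)
    have dPsi: "(\<Psi> has_vector_derivative
        (u * (g (R (t*u) *v V u) (W' u) + g (R (t*u) *v V' u + (t *\<^sub>R R' (t*u)) *v V u) (W u)) + 1 * A u)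
        - (u * (g (V' u) ((t*t) *\<^sub>R (R (t*u) *v W u)) + g ((t*t) *\<^sub>R (R (t*u) *v V u)) (W' u)) + 1 * B u) / t\<^sup>2)
        (at u within {0..1})"
      unfolding \<Psi>_def by (rule has_vector_derivative_diff[OF duA duB2])
    have e1: "g (R (t*u) *v V' u + (t *\<^sub>R R' (t*u)) *v V u) (W u)
        = g (R (t*u) *v V' u) (W u) + t * g (R' (t*u) *v V u) (W u)"
      by (simp add: bilinear_ladd[OF gb] bilinear_lmul[OF gb] scaleR_matrix_vector_assoc[symmetric])
    have e2: "g (V' u) ((t*t) *\<^sub>R (R (t*u) *v W u)) = (t*t) * g (R (t*u) *v V' u) (W u)"
      by (simp add: bilinear_rmul[OF gb] Rsym[OF tu])
    have e3: "g ((t*t) *\<^sub>R (R (t*u) *v V u)) (W' u) = (t*t) * g (R (t*u) *v V u) (W' u)"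
      by (simp add: bilinear_lmul[OF gb])
    show ?thesis
      using dPsi unfolding e1 e2 e3
      by (rule has_vector_derivative_eq_rhs) (use tau in \<open>simp add: A_def B_def field_simps power2_eq_square\<close>)
  qed
  have "((\<lambda>u. - g (V' u) (W' u) / t\<^sup>2 + g (R (t*u) *v V u) (W u) + t * (u * g (R' (t*u) *v V u) (W u)))
        has_integral \<Psi> 1 - \<Psi> 0) {0..1}"
  proof (rule fundamental_theorem_of_calculus)
    fix x :: real assume "x \<in> {0..1}"
    then show "(\<Psi> has_vector_derivative
      (- g (V' x) (W' x) / t\<^sup>2 + g (R (t*x) *v V x) (W x) + t * (x * g (R' (t*x) *v V x) (W x))))
      (at x within {0..1})" by (rule d\<Psi>)
  qed simp
  moreover have "\<Psi> 1 - \<Psi> 0 = - g (V' 1) (W' 1) / t\<^sup>2"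
    using W1 by (simp add: \<Psi>_def A_def B_def bilinear_rzero[OF gb])
  ultimately show ?thesis by simp
qed

lemma cont_Q:
  fixes R :: "real \<Rightarrow> real^'n^'n" and V :: "real \<Rightarrow> real^'n"
  assumes cR: "continuous_on {0..1} R" and tau: "0 < t" "t \<le> 1" and cV: "continuous_on {0..1} V"
  shows "continuous_on {0..1} (\<lambda>u. (t*t) *\<^sub>R (R (t*u) *v V u))"
proof -
  have "continuous_on {0..1} (\<lambda>u. R (t*u))"
    by (rule continuous_on_compose2[OF cR]) (use tau in \<open>auto intro!: continuous_intros simp: mult_le_one\<close>)
  then have "continuous_on {0..1} (\<lambda>u. R (t*u) *v V u)"
    using cV by (rule bilinear_continuous_on_compose[OF _ _ mv_bilinear])
  then show ?thesis by (intro continuous_intros)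
qed

lemma smooth:
  fixes V :: "real \<Rightarrow> 'a::euclidean_space"
  assumes cQ: "continuous_on {0..1} Q" and Fdef: "F = (\<lambda>u. integral {0..u} Q)"
    and hV: "\<forall>a\<in>{0..1}. V a = V 0 + integral {0..a} F + a *\<^sub>R C"
  shows "\<And>x. x \<in> {0..1} \<Longrightarrow> (V has_vector_derivative F x + C) (at x within {0..1})"
    and "\<And>x. x \<in> {0..1} \<Longrightarrow> ((\<lambda>u. F u + C) has_vector_derivative Q x) (at x within {0..1})"
    and "continuous_on {0..1} (\<lambda>u. F u + C)"
proof -
  have dF: "(F has_vector_derivative Q x) (at x within {0..1})" if "x \<in> {0..1}" for x
    unfolding Fdef by (rule integral_has_vector_derivative[OF cQ that])
  have cF: "continuous_on {0..1} F" by (rule continuous_on_vector_derivative[OF dF])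
  show "continuous_on {0..1} (\<lambda>u. F u + C)" using cF by (intro continuous_intros)
  fix x :: real assume x: "x \<in> {0..1}"
  show "((\<lambda>u. F u + C) has_vector_derivative Q x) (at x within {0..1})"
    using has_vector_derivative_add[OF dF[OF x] has_vector_derivative_const[of C]] by simp
  have dG: "((\<lambda>u. integral {0..u} F) has_vector_derivative F x) (at x within {0..1})"
    by (rule integral_has_vector_derivative[OF cF x])
  have dl: "((\<lambda>a. a *\<^sub>R C) has_vector_derivative 1 *\<^sub>R C) (at x within {0..1})"
    using bounded_linear.has_vector_derivative[OF bounded_linear_scaleR_left has_vector_derivative_id] .
  have "((\<lambda>a. V 0 + integral {0..a} F + a *\<^sub>R C) has_vector_derivative 0 + F x + 1 *\<^sub>R C) (at x within {0..1})"
    by (intro has_vector_derivative_add has_vector_derivative_const dG dl)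
  then have "((\<lambda>a. V 0 + integral {0..a} F + a *\<^sub>R C) has_vector_derivative F x + C) (at x within {0..1})"
    by simp
  then show "(V has_vector_derivative F x + C) (at x within {0..1})"
  proof (rule has_vector_derivative_transform[OF x, rotated])
    fix y :: real assume "y \<in> {0..1}"
    then show "V y = V 0 + integral {0..y} F + y *\<^sub>R C" using hV by blast
  qed
qed

lemma C1_H1w:
  fixes V :: "real \<Rightarrow> 'a::euclidean_space"
  assumes dV: "\<And>x. x \<in> {0..1} \<Longrightarrow> (V has_vector_derivative V' x) (at x within {0..1})"
    and cV': "continuous_on {0..1} V'"
  shows "H1w V' V 1"
  unfolding H1w_def
proof safe
  fix s :: real assume s: "s \<in> {0..1}"
  show "(V' has_integral V s - V 0) {0..s}"
  proof (rule fundamental_theorem_of_calculus)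
    fix x assume "x \<in> {0..s}"
    then show "(V has_vector_derivative V' x) (at x within {0..s})"
      using s by (intro has_vector_derivative_within_subset[OF dV]) auto
  qed (use s in auto)
next
  show "(\<lambda>s. (norm (V' s))\<^sup>2) integrable_on {0..1}"
    by (intro integrable_continuous_real continuous_intros cV')
qed

lemma deriv_int:
  fixes g :: "real^'n \<Rightarrow> real^'n \<Rightarrow> real" and R R' :: "real \<Rightarrow> real^'n^'n"
    and V V' W W' :: "real \<Rightarrow> real^'n"
  assumes gb: "bilinear g" and tau: "0 < t" "t \<le> 1"
    and dR: "\<And>s. s \<in> {0..1} \<Longrightarrow> (R has_vector_derivative R' s) (at s within {0..1})"
    and cR: "continuous_on {0..1} R" and cR': "continuous_on {0..1} R'"
    and cV: "continuous_on {0..1} V" and cW: "continuous_on {0..1} W"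
    and cV': "continuous_on {0..1} V'" and cW': "continuous_on {0..1} W'"
  shows "((\<lambda>\<tau>. integral {0..1} (\<lambda>u. g (V' u) (W' u) / \<tau> + \<tau> * g (R (\<tau>*u) *v V u) (W u))) has_field_derivative
          integral {0..1} (\<lambda>u. - g (V' u) (W' u) / t\<^sup>2 + g (R (t*u) *v V u) (W u) + t * (u * g (R' (t*u) *v V u) (W u))))
          (at t within {0<..1})"
proof -
  define f where "f \<tau> u = g (V' u) (W' u) / \<tau> + \<tau> * g (R (\<tau>*u) *v V u) (W u)" for \<tau> u
  define fx where "fx \<tau> u = - g (V' u) (W' u) / \<tau>\<^sup>2 + g (R (\<tau>*u) *v V u) (W u) + \<tau> * (u * g (R' (\<tau>*u) *v V u) (W u))" for \<tau> u
  let ?U = "{0<..1::real}"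
  have bbg: "bounded_bilinear g" using gb by (simp add: bilinear_conv_bounded_bilinear)
  have "((\<lambda>\<tau>. integral (cbox 0 1) (f \<tau>)) has_field_derivative integral (cbox 0 1) (fx t)) (at t within ?U)"
  proof (rule leibniz_rule_field_derivative)
    fix x u :: real assume x: "x \<in> ?U" and u: "u \<in> cbox 0 1"
    have u01: "u \<in> {0..1}" using u by simp
    have "((\<lambda>\<tau>. \<tau>*u) has_real_derivative u) (at x within ?U)"
      by (auto intro!: derivative_eq_intros)
    then have d1: "((\<lambda>\<tau>. \<tau>*u) has_vector_derivative u) (at x within ?U)"
      by (simp add: has_real_derivative_iff_has_vector_derivative)
    have xu: "x * u \<in> {0..1}" using x u01 by (auto simp: mult_le_one)
    have "(R has_vector_derivative R' (x*u)) (at (x*u) within (\<lambda>\<tau>. \<tau>*u) ` ?U)"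
      by (rule has_vector_derivative_within_subset[OF dR[OF xu]]) (use u01 in \<open>auto simp: mult_le_one\<close>)
    from vector_diff_chain_within[OF d1 this]
    have dRt: "((\<lambda>\<tau>. R (\<tau>*u)) has_vector_derivative u *\<^sub>R R' (x*u)) (at x within ?U)"
      by (simp add: o_def)
    have lin1: "linear (\<lambda>M::real^'n^'n. M *v V u)" using mv_bilinear unfolding bilinear_def by blast
    have lin2: "linear (\<lambda>z. g z (W u))" using gb by (simp add: bilinear_def)
    have bl: "bounded_linear (\<lambda>M::real^'n^'n. g (M *v V u) (W u))"
      using linear_compose[OF lin1 lin2] by (simp add: o_def linear_conv_bounded_linear)
    have d\<phi>: "((\<lambda>\<tau>. g (R (\<tau>*u) *v V u) (W u)) has_vector_derivative u * g (R' (x*u) *v V u) (W u)) (at x within ?U)"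
      using bounded_linear.has_vector_derivative[OF bl dRt]
      by (simp add: scaleR_matrix_vector_assoc[symmetric] bilinear_lmul[OF gb])
    have dm: "((\<lambda>\<tau>. \<tau> * g (R (\<tau>*u) *v V u) (W u)) has_vector_derivative
        x * (u * g (R' (x*u) *v V u) (W u)) + 1 * g (R (x*u) *v V u) (W u)) (at x within ?U)"
      by (rule bounded_bilinear.has_vector_derivative[OF bounded_bilinear_mult has_vector_derivative_id d\<phi>])
    have x0: "x \<noteq> 0" using x by auto
    have "((\<lambda>\<tau>. g (V' u) (W' u) / \<tau>) has_real_derivative - g (V' u) (W' u) / x\<^sup>2) (at x within ?U)"
      using x0 by (auto intro!: derivative_eq_intros simp: power2_eq_square field_simps)
    then have dc: "((\<lambda>\<tau>. g (V' u) (W' u) / \<tau>) has_vector_derivative - g (V' u) (W' u) / x\<^sup>2) (at x within ?U)"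
      by (simp add: has_real_derivative_iff_has_vector_derivative)
    have "((\<lambda>\<tau>. f \<tau> u) has_vector_derivative fx x u) (at x within ?U)"
      unfolding f_def fx_def
      by (rule has_vector_derivative_eq_rhs[OF has_vector_derivative_add[OF dc dm]]) (simp add: algebra_simps)
    then show "((\<lambda>\<tau>. f \<tau> u) has_field_derivative fx x u) (at x within ?U)"
      by (simp add: has_real_derivative_iff_has_vector_derivative)
  next
    fix x :: real assume x: "x \<in> ?U"
    have "continuous_on {0..1} (\<lambda>u. R (x*u))"
      by (rule continuous_on_compose2[OF cR]) (use x in \<open>auto intro!: continuous_intros simp: mult_le_one\<close>)
    then have "continuous_on {0..1} (\<lambda>u. R (x*u) *v V u)"
      using cV by (rule bilinear_continuous_on_compose[OF _ _ mv_bilinear])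
    then have "continuous_on {0..1} (\<lambda>u. g (R (x*u) *v V u) (W u))"
      using cW by (rule bilinear_continuous_on_compose[OF _ _ gb])
    moreover have "continuous_on {0..1} (\<lambda>u. g (V' u) (W' u))"
      using cV' cW' by (rule bilinear_continuous_on_compose[OF _ _ gb])
    ultimately have "continuous_on {0..1} (f x)"
      unfolding f_def using x by (intro continuous_intros) auto
    then show "f x integrable_on cbox 0 1" by (simp add: integrable_continuous_real)
  next
    have S: "(\<lambda>p. fst p * snd p) ` (?U \<times> cbox 0 1) \<subseteq> {0..1}"
      by (auto simp: mult_le_one box_real(2))
    have c1: "continuous_on (?U \<times> cbox 0 1) (\<lambda>p. R (fst p * snd p))"
      by (rule continuous_on_compose2[OF cR _ S]) (intro continuous_intros)
    have c2: "continuous_on (?U \<times> cbox 0 1) (\<lambda>p. R' (fst p * snd p))"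
      by (rule continuous_on_compose2[OF cR' _ S]) (intro continuous_intros)
    have S2: "snd ` (?U \<times> cbox 0 1) \<subseteq> {0..1::real}" by (auto simp: box_real(2))
    have cs: "continuous_on (?U \<times> cbox 0 1) (\<lambda>p. h (snd p))" if "continuous_on {0..1} h" for h :: "real \<Rightarrow> real^'n"
      by (rule continuous_on_compose2[OF that _ S2]) (intro continuous_intros)
    have c3: "continuous_on (?U \<times> cbox 0 1) (\<lambda>p. g (V' (snd p)) (W' (snd p)))"
      using cs[OF cV'] cs[OF cW'] by (rule bilinear_continuous_on_compose[OF _ _ gb])
    have c4: "continuous_on (?U \<times> cbox 0 1) (\<lambda>p. g (R (fst p * snd p) *v V (snd p)) (W (snd p)))"
      using bilinear_continuous_on_compose[OF c1 cs[OF cV] mv_bilinear] cs[OF cW]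
      by (rule bilinear_continuous_on_compose[OF _ _ gb])
    have c5: "continuous_on (?U \<times> cbox 0 1) (\<lambda>p. g (R' (fst p * snd p) *v V (snd p)) (W (snd p)))"
      using bilinear_continuous_on_compose[OF c2 cs[OF cV] mv_bilinear] cs[OF cW]
      by (rule bilinear_continuous_on_compose[OF _ _ gb])
    have "continuous_on (?U \<times> cbox 0 1) (\<lambda>p. fx (fst p) (snd p))"
      unfolding fx_def using c3 c4 c5
      by (intro continuous_intros) (auto simp: power2_eq_square)
    then show "continuous_on (?U \<times> cbox 0 1) (\<lambda>(x, t). fx x t)"
      by (simp add: case_prod_beta')
  qed (use tau in auto)
  then show ?thesis unfolding f_def[abs_def] fx_def[abs_def] by (simp add: box_real(2))
qed

theorem proposition3p5:
  fixes g :: "real^'n \<Rightarrow> real^'n \<Rightarrow> real"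
    and R :: "real \<Rightarrow> real^'n^'n"
    and P :: "(real^'n) set"
    and S :: "real^'n \<Rightarrow> real^'n"
  assumes g_bil: "bilinear g"
    and g_sym: "\<forall>x y. g x y = g y x"
    and g_nondeg: "\<forall>x. (\<forall>y. g x y = 0) \<longrightarrow> x = 0"
    and R_C1: "\<exists>R'. (\<forall>s\<in>{0..1}. (R has_vector_derivative R' s) (at s within {0..1}))
                    \<and> continuous_on {0..1} R'"
    and R_sym: "\<forall>s\<in>{0..1}. \<forall>x y. g (R s *v x) y = g x (R s *v y)"
    and P_sub: "subspace P"
    and g_nondeg_P: "\<forall>x\<in>P. (\<forall>y\<in>P. g x y = 0) \<longrightarrow> x = 0"
    and S_lin: "linear S"
    and S_P: "S ` P \<subseteq> P"
    and S_sym: "\<forall>x\<in>P. \<forall>y\<in>P. g (S x) y = g x (S y)"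
  shows "\<forall>t\<in>{0<..1}. \<forall>V\<in>Nker g R P S t. \<forall>W\<in>Nker g R P S t.
           ((\<lambda>\<tau>. Ihat g R S \<tau> V W) has_real_derivative
              (- g (vector_derivative (phi t V) (at t within {0..t}))
                   (vector_derivative (phi t W) (at t within {0..t}))))
           (at t within {0<..1})"
proof (intro ballI)
  fix t V W
  assume t: "t \<in> {0<..1}" and hVN: "V \<in> Nker g R P S t" and hWN: "W \<in> Nker g R P S t"
  have tau: "0 < t" "t \<le> 1" using t by auto
  obtain R' where dR: "\<And>s. s \<in> {0..1} \<Longrightarrow> (R has_vector_derivative R' s) (at s within {0..1})"
    and cR': "continuous_on {0..1} R'" using R_C1 by blast
  have cR: "continuous_on {0..1} R" by (rule continuous_on_vector_derivative[OF dR])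
  have Rsym: "\<And>s x y. s \<in> {0..1} \<Longrightarrow> g (R s *v x) y = g x (R s *v y)" using R_sym by blast
  have VH: "V \<in> Hsp P 1" and kerV: "\<And>X. X \<in> Hsp P 1 \<Longrightarrow> Ihat g R S t V X = 0"
    using hVN by (auto simp: Nker_def)
  obtain Dv where hDv: "H1w Dv V 1" using VH by (auto simp: Hsp_def H1_iff)
  define QV where "QV = (\<lambda>u. (t*t) *\<^sub>R (R (t*u) *v V u))"
  define FV where "FV = (\<lambda>u. integral {0..u} QV)"
  obtain CV where VC: "\<forall>a\<in>{0..1}. V a = V 0 + integral {0..a} FV + a *\<^sub>R CV"
    using regularity[OF g_bil g_nondeg tau cR P_sub hDv kerV QV_def FV_def] by blast
  have cQV: "continuous_on {0..1} QV" unfolding QV_def by (rule cont_Q[OF cR tau H1w_cont[OF hDv]])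
  note smV = smooth[OF cQV FV_def VC]
  define V' where "V' u = FV u + CV" for u
  have dV: "\<And>x. x \<in> {0..1} \<Longrightarrow> (V has_vector_derivative V' x) (at x within {0..1})"
    using smV(1) by (simp add: V'_def)
  have dV': "\<And>x. x \<in> {0..1} \<Longrightarrow> (V' has_vector_derivative (t*t) *\<^sub>R (R (t*x) *v V x)) (at x within {0..1})"
    using smV(2) unfolding V'_def[abs_def] QV_def by simp
  have cV': "continuous_on {0..1} V'" using smV(3) unfolding V'_def[abs_def] .
  have hV': "H1w V' V 1" by (rule C1_H1w[OF dV cV'])
  have cV: "continuous_on {0..1} V" by (rule H1w_cont[OF hV'])
  have WH: "W \<in> Hsp P 1" and kerW: "\<And>X. X \<in> Hsp P 1 \<Longrightarrow> Ihat g R S t W X = 0"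
    using hWN by (auto simp: Nker_def)
  obtain Dw where hDw: "H1w Dw W 1" using WH by (auto simp: Hsp_def H1_iff)
  define QW where "QW = (\<lambda>u. (t*t) *\<^sub>R (R (t*u) *v W u))"
  define FW where "FW = (\<lambda>u. integral {0..u} QW)"
  obtain CW where WC: "\<forall>a\<in>{0..1}. W a = W 0 + integral {0..a} FW + a *\<^sub>R CW"
    using regularity[OF g_bil g_nondeg tau cR P_sub hDw kerW QW_def FW_def] by blast
  have cQW: "continuous_on {0..1} QW" unfolding QW_def by (rule cont_Q[OF cR tau H1w_cont[OF hDw]])
  note smW = smooth[OF cQW FW_def WC]
  define W' where "W' u = FW u + CW" for u
  have dW: "\<And>x. x \<in> {0..1} \<Longrightarrow> (W has_vector_derivative W' x) (at x within {0..1})"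
    using smW(1) by (simp add: W'_def)
  have dW': "\<And>x. x \<in> {0..1} \<Longrightarrow> (W' has_vector_derivative (t*t) *\<^sub>R (R (t*x) *v W x)) (at x within {0..1})"
    using smW(2) unfolding W'_def[abs_def] QW_def by simp
  have cW': "continuous_on {0..1} W'" using smW(3) unfolding W'_def[abs_def] .
  have hW': "H1w W' W 1" by (rule C1_H1w[OF dW cW'])
  have cW: "continuous_on {0..1} W" by (rule H1w_cont[OF hW'])
  have W1: "W 1 = 0" using WH by (simp add: Hsp_def)
  have Ieq: "Ihat g R S \<tau> V W = integral {0..1} (\<lambda>u. g (V' u) (W' u) / \<tau> + \<tau> * g (R (\<tau>*u) *v V u) (W u))
      - g (S (V 0)) (W 0)" if "\<tau> \<in> {0<..1}" for \<tau>
    using L1[OF g_bil _ _ cR hV' hW', of \<tau> S] that by auto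
  have D1: "((\<lambda>\<tau>. integral {0..1} (\<lambda>u. g (V' u) (W' u) / \<tau> + \<tau> * g (R (\<tau>*u) *v V u) (W u))) has_field_derivative
          integral {0..1} (\<lambda>u. - g (V' u) (W' u) / t\<^sup>2 + g (R (t*u) *v V u) (W u) + t * (u * g (R' (t*u) *v V u) (W u))))
          (at t within {0<..1})"
    by (rule deriv_int[OF g_bil tau dR cR cR' cV cW cV' cW'])
  have FI: "integral {0..1} (\<lambda>u. - g (V' u) (W' u) / t\<^sup>2 + g (R (t*u) *v V u) (W u) + t * (u * g (R' (t*u) *v V u) (W u)))
      = - g (V' 1) (W' 1) / t\<^sup>2"
    by (rule integral_unique[OF final_identity[OF g_bil Rsym tau dR dV dV' dW dW' W1]])
  have D2: "((\<lambda>\<tau>. integral {0..1} (\<lambda>u. g (V' u) (W' u) / \<tau> + \<tau> * g (R (\<tau>*u) *v V u) (W u)) - g (S (V 0)) (W 0))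
      has_field_derivative - g (V' 1) (W' 1) / t\<^sup>2) (at t within {0<..1})"
    using DERIV_diff[OF D1 DERIV_const[of "g (S (V 0)) (W 0)"]] FI by simp
  have D3: "((\<lambda>\<tau>. Ihat g R S \<tau> V W) has_field_derivative - g (V' 1) (W' 1) / t\<^sup>2) (at t within {0<..1})"
  proof (rule has_field_derivative_transform_within[OF D2 zero_less_one t])
    fix x assume "x \<in> {0<..1::real}"
    then show "integral {0..1} (\<lambda>u. g (V' u) (W' u) / x + x * g (R (x*u) *v V u) (W u)) - g (S (V 0)) (W 0)
        = Ihat g R S x V W" by (simp add: Ieq)
  qed
  have vd: "vector_derivative (phi t X) (at t within {0..t}) = (1/t) *\<^sub>R X' 1"
    if dX: "\<And>x. x \<in> {0..1} \<Longrightarrow> (X has_vector_derivative X' x) (at x within {0..1})" for X X' :: "real \<Rightarrow> real^'n"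
  proof -
    have "((\<lambda>s. s/t) has_real_derivative 1/t) (at t within {0..t})"
      using tau by (auto intro!: derivative_eq_intros)
    then have d1: "((\<lambda>s. s/t) has_vector_derivative 1/t) (at t within {0..t})"
      by (simp add: has_real_derivative_iff_has_vector_derivative)
    have im: "(\<lambda>s. s/t) ` {0..t} \<subseteq> {0..1}" using tau by (auto simp: field_simps)
    have "(X has_vector_derivative X' 1) (at 1 within (\<lambda>s. s/t) ` {0..t})"
      by (rule has_vector_derivative_within_subset[OF dX im]) simp
    then have "(X has_vector_derivative X' 1) (at ((\<lambda>s. s/t) t) within (\<lambda>s. s/t) ` {0..t})"
      using tau by simp
    from vector_diff_chain_within[OF d1 this]
    have "(phi t X has_vector_derivative (1/t) *\<^sub>R X' 1) (at t within {0..t})"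
      by (simp add: phi_def o_def)
    then have "vector_derivative (phi t X) (at t within cbox 0 t) = (1/t) *\<^sub>R X' 1"
      by (intro vector_derivative_within_cbox) (use tau in \<open>auto simp: box_real(2)\<close>)
    then show ?thesis by (simp add: box_real(2))
  qed
  have "- g (vector_derivative (phi t V) (at t within {0..t})) (vector_derivative (phi t W) (at t within {0..t}))
      = - g (V' 1) (W' 1) / t\<^sup>2"
    using vd[OF dV] vd[OF dW]
    by (simp add: bilinear_lmul[OF g_bil] bilinear_rmul[OF g_bil] power2_eq_square)
  then show "((\<lambda>\<tau>. Ihat g R S \<tau> V W) has_real_derivative
              (- g (vector_derivative (phi t V) (at t within {0..t}))
                   (vector_derivative (phi t W) (at t within {0..t}))))
           (at t within {0<..1})"
    using D3 by simp
qed

end
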